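(* The category $\mathbf{ProLam}$ is the limit of the codirected diagram of cartesian closed categories $Q \mapsto \mathbf{Lam}_Q$, $(f \colon Q \twoheadrightarrow Q') \mapsto \mathbf{Lam}_f$, indexed by finite sets and partial surjections, with limit projection functors $\pi_Q \colon \mathbf{ProLam} \to \mathbf{Lam}_Q$ that are the identity on objects and send a morphism $\theta \in \mathbf{ProLam}(A,B) = \widehat{\Lambda}(A\Rightarrow B)$ to the element of $\mathbf{Lam}_Q(A,B)$ corresponding to $\theta_Q$ under the bijection $\mathbf{Lam}_Q(A,B) \cong D_Q(A \Rightarrow B)$, $[M] \mapsto [\![M]\!]_Q$.
   Context: Simple types are built from a base type $o$ (with the type constructors of the simply typed $\lambda$-calculus, so that $\mathbf{Lam}$ is the free cartesian closed category on one object). $\Lambda(A)$: closed terms of type $A$ modulo $\beta\eta$; $\mathbf{Lam}$ has simple types as objects and $\mathbf{Lam}(A,B)=\Lambda(A\Rightarrow B)$. For a finite set $Q$, $[\![-]\!]_Q$ is the standard interpretation in finite sets ($[\![o]\!]_Q = Q$, $[\![A\Rightarrow B]\!]_Q$ all functions); $D_Q(A) = \{[\![M]\!]_Q : M\in\Lambda(A)\}$. $M\sim_Q N$ iff $[\![M]\!]_Q = [\![N]\!]_Q$; $\mathbf{Lam}_Q = \mathbf{Lam}/\sim_Q$, a cartesian closed category. A partial surjection $f\colon Q\twoheadrightarrow Q'$ is a relation that is the graph of a partial function surjective onto $Q'$; it induces the identity-on-objects cartesian closed functor $\mathbf{Lam}_f\colon\mathbf{Lam}_Q\to\mathbf{Lam}_{Q'}$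 sending the $\sim_Q$-class of $M$ to its $\sim_{Q'}$-class. Logical relations: for $R\subseteq Q\times Q'$, $[\![o]\!]_R = R$, $[\![A\Rightarrow B]\!]_R = \{(g,h) : \forall (x,y)\in[\![A]\!]_R,\ (g(x),h(y))\in[\![B]\!]_R\}$. A profinite $\lambda$-term of type $A$ is a family $(\theta_Q)$ over finite sets with $\theta_Q\in D_Q(A)$ and $(\theta_Q,\theta_{Q'})\in[\![A]\!]_f$ for every partial surjection $f\colon Q\twoheadrightarrow Q'$; $\widehat{\Lambda}(A)$ is their set. $\mathbf{ProLam}$ has simple types as objects, $\mathbf{ProLam}(A,B)=\widehat{\Lambda}(A\Rightarrow B)$, and componentwise composition $(\psi\circ\theta)_Q = \psi_Q\circ\theta_Q$. *)

theory Defs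
  imports Main "HOL-Library.FSet"
begin

datatype sty = TO | TUnit | TProd sty sty | TArr sty sty

text \<open>Church-style terms with de Bruijn indices.\<close>
datatype tm = Var nat | Lam sty tm | App tm tm | Pair tm tm | Fst tm | Snd tm | Star

inductive typing :: "sty list \<Rightarrow> tm \<Rightarrow> sty \<Rightarrow> bool" where
  t_var: "i < length \<Gamma> \<Longrightarrow> typing \<Gamma> (Var i) (\<Gamma> ! i)"
| t_lam: "typing (A # \<Gamma>) M B \<Longrightarrow> typing \<Gamma> (Lam A M) (TArr A B)"
| t_app: "typing \<Gamma> M (TArr A B) \<Longrightarrow> typing \<Gamma> N A \<Longrightarrow> typing \<Gamma> (App M N) B"
| t_pair: "typing \<Gamma> M A \<Longrightarrow> typing \<Gamma> N B \<Longrightarrow> typing \<Gamma> (Pair M N) (TProd A B)"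
| t_fst: "typing \<Gamma> M (TProd A B) \<Longrightarrow> typing \<Gamma> (Fst M) A"
| t_snd: "typing \<Gamma> M (TProd A B) \<Longrightarrow> typing \<Gamma> (Snd M) B"
| t_star: "typing \<Gamma> Star TUnit"

text \<open>Closed terms of type A (raw; beta-eta is subsumed by the semantic quotients below).\<close>
definition closed_tms :: "sty \<Rightarrow> tm set" where
  "closed_tms A = {M. typing [] M A}"

text \<open>Semantic values; functions are represented by their (finite) graphs.\<close>
datatype val = Atom nat | UnitV | PairV val val | Graph "(val \<times> val) fset"

fun vfst :: "val \<Rightarrow> val" where
  "vfst (PairV x y) = x"
| "vfst _ = undefined"

fun vsnd :: "val \<Rightarrow> val" where
  "vsnd (PairV x y) = y"
| "vsnd _ = undefined"

fun vapp :: "val \<Rightarrow> val \<Rightarrow> val" where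
  "vapp (Graph G) x = (THE y. (x, y) |\<in>| G)"
| "vapp _ x = undefined"

primrec semdom :: "nat set \<Rightarrow> sty \<Rightarrow> val set" where
  "semdom Q TO = Atom ` Q"
| "semdom Q TUnit = {UnitV}"
| "semdom Q (TProd A B) = {PairV x y | x y. x \<in> semdom Q A \<and> y \<in> semdom Q B}"
| "semdom Q (TArr A B) = {Graph G | G. fset G \<subseteq> semdom Q A \<times> semdom Q B \<and>
                                     (\<forall>x\<in>semdom Q A. \<exists>!y. (x, y) |\<in>| G)}"

definition graph_of :: "nat set \<Rightarrow> sty \<Rightarrow> (val \<Rightarrow> val) \<Rightarrow> val" where
  "graph_of Q A f = Graph (Abs_fset ((\<lambda>x. (x, f x)) ` semdom Q A))"

primrec sem :: "nat set \<Rightarrow> val list \<Rightarrow> tm \<Rightarrow> val" where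
  "sem Q \<rho> (Var i) = \<rho> ! i"
| "sem Q \<rho> (Lam A M) = graph_of Q A (\<lambda>x. sem Q (x # \<rho>) M)"
| "sem Q \<rho> (App M N) = vapp (sem Q \<rho> M) (sem Q \<rho> N)"
| "sem Q \<rho> (Pair M N) = PairV (sem Q \<rho> M) (sem Q \<rho> N)"
| "sem Q \<rho> (Fst M) = vfst (sem Q \<rho> M)"
| "sem Q \<rho> (Snd M) = vsnd (sem Q \<rho> M)"
| "sem Q \<rho> Star = UnitV"

definition interp :: "nat set \<Rightarrow> tm \<Rightarrow> val" where
  "interp Q M = sem Q [] M"

definition Dsem :: "nat set \<Rightarrow> sty \<Rightarrow> val set" where
  "Dsem Q A = interp Q ` closed_tms A"

definition partial_surj :: "nat set \<Rightarrow> nat set \<Rightarrow> (nat \<times> nat) set \<Rightarrow> bool" where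
  "partial_surj Q Q' R \<longleftrightarrow> R \<subseteq> Q \<times> Q' \<and>
     (\<forall>x y z. (x, y) \<in> R \<longrightarrow> (x, z) \<in> R \<longrightarrow> y = z) \<and> (\<forall>y\<in>Q'. \<exists>x. (x, y) \<in> R)"

primrec lrel :: "nat set \<Rightarrow> nat set \<Rightarrow> (nat \<times> nat) set \<Rightarrow> sty \<Rightarrow> (val \<times> val) set" where
  "lrel Q Q' R TO = {(Atom x, Atom y) | x y. (x, y) \<in> R}"
| "lrel Q Q' R TUnit = {(UnitV, UnitV)}"
| "lrel Q Q' R (TProd A B) = {(PairV a b, PairV c d) | a b c d.
                                (a, c) \<in> lrel Q Q' R A \<and> (b, d) \<in> lrel Q Q' R B}"
| "lrel Q Q' R (TArr A B) = {(g, h). g \<in> semdom Q (TArr A B) \<and> h \<in> semdom Q' (TArr A B) \<and>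
                              (\<forall>(x, y) \<in> lrel Q Q' R A. (vapp g x, vapp h y) \<in> lrel Q Q' R B)}"

text \<open>Families indexed by finite sets (finite subsets of nat), normalised to undefined elsewhere.\<close>
definition profinite :: "sty \<Rightarrow> (nat set \<Rightarrow> val) \<Rightarrow> bool" where
  "profinite A \<theta> \<longleftrightarrow> (\<forall>Q. \<not> finite Q \<longrightarrow> \<theta> Q = undefined) \<and>
     (\<forall>Q. finite Q \<longrightarrow> \<theta> Q \<in> Dsem Q A) \<and>
     (\<forall>Q Q' R. finite Q \<longrightarrow> finite Q' \<longrightarrow> partial_surj Q Q' R \<longrightarrow> (\<theta> Q, \<theta> Q') \<in> lrel Q Q' R A)"

definition ProLam_hom :: "sty \<Rightarrow> sty \<Rightarrow> (nat set \<Rightarrow> val) set" where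
  "ProLam_hom A B = {\<theta>. profinite (TArr A B) \<theta>}"

definition pro_comp :: "sty \<Rightarrow> (nat set \<Rightarrow> val) \<Rightarrow> (nat set \<Rightarrow> val) \<Rightarrow> (nat set \<Rightarrow> val)" where
  "pro_comp A \<theta> \<psi> = (\<lambda>Q. if finite Q then graph_of Q A (\<lambda>x. vapp (\<psi> Q) (vapp (\<theta> Q) x)) else undefined)"

definition pro_id :: "sty \<Rightarrow> (nat set \<Rightarrow> val)" where
  "pro_id A = (\<lambda>Q. if finite Q then graph_of Q A (\<lambda>x. x) else undefined)"

definition simrel :: "nat set \<Rightarrow> sty \<Rightarrow> (tm \<times> tm) set" where
  "simrel Q T = {(M, N). typing [] M T \<and> typing [] N T \<and> interp Q M = interp Q N}"

definition lamcls :: "nat set \<Rightarrow> sty \<Rightarrow> tm \<Rightarrow> tm set" where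
  "lamcls Q T M = simrel Q T `` {M}"

definition lam_hom :: "nat set \<Rightarrow> sty \<Rightarrow> sty \<Rightarrow> tm set set" where
  "lam_hom Q A B = closed_tms (TArr A B) // simrel Q (TArr A B)"

definition tcomp :: "sty \<Rightarrow> tm \<Rightarrow> tm \<Rightarrow> tm" where
  "tcomp A N M = Lam A (App N (App M (Var 0)))"

definition lam_comp :: "nat set \<Rightarrow> sty \<Rightarrow> sty \<Rightarrow> sty \<Rightarrow> tm set \<Rightarrow> tm set \<Rightarrow> tm set" where
  "lam_comp Q A B C X Y = lamcls Q (TArr A C) (tcomp A (SOME N. N \<in> Y) (SOME M. M \<in> X))"

definition lam_id :: "nat set \<Rightarrow> sty \<Rightarrow> tm set" where
  "lam_id Q A = lamcls Q (TArr A A) (Lam A (Var 0))"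

text \<open>Lam_f (for f : Q ->> Q'): the ~_Q class of M goes to the ~_Q' class of M.\<close>
definition lam_f :: "nat set \<Rightarrow> sty \<Rightarrow> tm set \<Rightarrow> tm set" where
  "lam_f Q' T X = lamcls Q' T (SOME M. M \<in> X)"

definition pi_proj :: "nat set \<Rightarrow> sty \<Rightarrow> (nat set \<Rightarrow> val) \<Rightarrow> tm set" where
  "pi_proj Q T \<theta> = {M. typing [] M T \<and> interp Q M = \<theta> Q}"

end

theory Submission
  imports Defs
begin


lemma finite_semdom: "finite Q \<Longrightarrow> finite (semdom Q T)"
proof (induction T)
  case (TProd A B)
  have "semdom Q (TProd A B) = (\<lambda>(x,y). PairV x y) ` (semdom Q A \<times> semdom Q B)" by auto
  then show ?case using TProd by simp
next
  case (TArr A B)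
  let ?S = "semdom Q A \<times> semdom Q B"
  have "semdom Q (TArr A B) \<subseteq> Graph ` Abs_fset ` Pow ?S"
  proof
    fix g assume "g \<in> semdom Q (TArr A B)"
    then obtain G where g: "g = Graph G" "fset G \<subseteq> ?S" by auto
    then show "g \<in> Graph ` Abs_fset ` Pow ?S"
      by (metis Pow_iff fset_inverse image_eqI)
  qed
  moreover have "finite ?S" using TArr by simp
  ultimately show ?case by (meson finite_Pow_iff finite_imageI finite_subset)
next
  case TO then show ?case by simp
next
  case TUnit then show ?case by simp
qed

lemma vapp_graph_of:
  assumes "finite Q" "x \<in> semdom Q A"
  shows "vapp (graph_of Q A f) x = f x"
proof -
  have fin: "finite ((\<lambda>x. (x, f x)) ` semdom Q A)" using finite_semdom assms by auto
  have "fset (Abs_fset ((\<lambda>x. (x, f x)) ` semdom Q A)) = (\<lambda>x. (x, f x)) ` semdom Q A"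
    using fin by (simp add: Abs_fset_inverse)
  then show ?thesis using assms unfolding graph_of_def by (simp add: image_iff the_equality)
qed

lemma graph_of_mem:
  assumes "finite Q" "\<And>x. x \<in> semdom Q A \<Longrightarrow> f x \<in> semdom Q B"
  shows "graph_of Q A f \<in> semdom Q (TArr A B)"
proof -
  have fin: "finite ((\<lambda>x. (x, f x)) ` semdom Q A)" using finite_semdom assms by auto
  have e: "fset (Abs_fset ((\<lambda>x. (x, f x)) ` semdom Q A)) = (\<lambda>x. (x, f x)) ` semdom Q A"
    using fin by (simp add: Abs_fset_inverse)
  have "fset (Abs_fset ((\<lambda>x. (x, f x)) ` semdom Q A)) \<subseteq> semdom Q A \<times> semdom Q B"
    using assms(2) e by auto
  moreover have "\<forall>x\<in>semdom Q A. \<exists>!y. (x, y) |\<in>| Abs_fset ((\<lambda>x. (x, f x)) ` semdom Q A)"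
    unfolding e by auto
  ultimately show ?thesis unfolding graph_of_def semdom.simps by blast
qed

lemma semdom_arrE:
  assumes "g \<in> semdom Q (TArr A B)"
  obtains G where "g = Graph G" "fset G \<subseteq> semdom Q A \<times> semdom Q B"
    "\<And>x. x \<in> semdom Q A \<Longrightarrow> \<exists>!y. (x, y) |\<in>| G"
proof -
  have "\<exists>G. g = Graph G \<and> fset G \<subseteq> semdom Q A \<times> semdom Q B \<and> (\<forall>x\<in>semdom Q A. \<exists>!y. (x, y) |\<in>| G)"
    using assms by simp
  then obtain G where G: "g = Graph G \<and> fset G \<subseteq> semdom Q A \<times> semdom Q B \<and> (\<forall>x\<in>semdom Q A. \<exists>!y. (x, y) |\<in>| G)" ..
  show ?thesis
    apply (rule that[of G])
    using G apply simp
    using G apply simp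
    using G apply simp
    done
qed

lemma vapp_Graph:
  assumes "(x,y) |\<in>| G" "\<exists>!y. (x, y) |\<in>| G"
  shows "vapp (Graph G) x = y"
  using assms by (simp add: the1_equality)

lemma vapp_mem:
  assumes "g \<in> semdom Q (TArr A B)" "x \<in> semdom Q A"
  shows "vapp g x \<in> semdom Q B"
proof -
  obtain G where g: "g = Graph G" "fset G \<subseteq> semdom Q A \<times> semdom Q B"
    "\<And>x. x \<in> semdom Q A \<Longrightarrow> \<exists>!y. (x, y) |\<in>| G" by (metis semdom_arrE[OF assms(1)])
  have u: "\<exists>!y. (x, y) |\<in>| G" using g(3) assms(2) by simp
  then obtain y where y: "(x,y) |\<in>| G" by (meson theI')
  have "vapp g x = y" using g(1) y u vapp_Graph by simp
  moreover have "y \<in> semdom Q B" using y g(2) by blast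
  ultimately show ?thesis by simp
qed

lemma arr_eq:
  assumes "g \<in> semdom Q (TArr A B)" "h \<in> semdom Q (TArr A B)"
    "\<And>x. x \<in> semdom Q A \<Longrightarrow> vapp g x = vapp h x"
  shows "g = h"
proof -
  have key: "fset G = (\<lambda>x. (x, vapp (Graph G) x)) ` semdom Q A" if "Graph G \<in> semdom Q (TArr A B)" for G
  proof -
    from that have G: "fset G \<subseteq> semdom Q A \<times> semdom Q B" "\<forall>x\<in>semdom Q A. \<exists>!y. (x, y) |\<in>| G" by simp_all
    have v: "vapp (Graph G) x = y" if "(x,y) |\<in>| G" "x \<in> semdom Q A" for x y
    proof -
      have "\<exists>!y. (x, y) |\<in>| G" using G(2) that(2) by blast
      then show ?thesis using that(1) by (simp add: the1_equality)
    qed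
    show ?thesis
    proof
      show "fset G \<subseteq> (\<lambda>x. (x, vapp (Graph G) x)) ` semdom Q A"
      proof
      fix p assume p: "p \<in> fset G"
      obtain x y where xy: "p = (x,y)" by fastforce
      have "x \<in> semdom Q A" using p xy G(1) by blast
      then show "p \<in> (\<lambda>x. (x, vapp (Graph G) x)) ` semdom Q A" using v p xy by force
    qed
      show "(\<lambda>x. (x, vapp (Graph G) x)) ` semdom Q A \<subseteq> fset G"
      proof
      fix p assume "p \<in> (\<lambda>x. (x, vapp (Graph G) x)) ` semdom Q A"
      then obtain x where x: "x \<in> semdom Q A" "p = (x, vapp (Graph G) x)" by blast
      then obtain y where y: "(x,y) |\<in>| G" using G(2) by blast
      then show "p \<in> fset G" using v x by simp
    qed
    qed
  qed
  obtain G H where "g = Graph G" "h = Graph H" using assms(1,2) by (metis semdom_arrE)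
  moreover have "fset G = fset H" if "g = Graph G" "h = Graph H" for G H
  proof -
    have "fset G = (\<lambda>x. (x, vapp g x)) ` semdom Q A" using key assms(1) that by simp
    also have "\<dots> = (\<lambda>x. (x, vapp h x)) ` semdom Q A" using assms(3) by (auto intro!: image_cong)
    also have "\<dots> = fset H" using key assms(2) that by simp
    finally show ?thesis .
  qed
  ultimately show ?thesis by (metis fset_inject)
qed



lemma typing_weaken: "typing \<Gamma> M T \<Longrightarrow> typing (\<Gamma> @ \<Delta>) M T"
proof (induction rule: typing.induct)
  case (t_var i \<Gamma>)
  then show ?case using typing.t_var[of i "\<Gamma> @ \<Delta>"] by (simp add: nth_append)
qed (auto intro: typing.intros)

lemma sem_env: "typing \<Gamma> M T \<Longrightarrow> (\<forall>i<length \<Gamma>. \<rho> ! i = \<rho>' ! i) \<Longrightarrow> sem Q \<rho> M = sem Q \<rho>' M"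
proof (induction arbitrary: \<rho> \<rho>' rule: typing.induct)
  case (t_lam A \<Gamma> M B)
  have "sem Q (x # \<rho>) M = sem Q (x # \<rho>') M" for x
    using t_lam.IH[of "x # \<rho>" "x # \<rho>'"] t_lam.prems by (simp add: nth_Cons split: nat.split)
  then show ?case by simp
next
  case (t_app \<Gamma> M A B N)
  have "sem Q \<rho> M = sem Q \<rho>' M" "sem Q \<rho> N = sem Q \<rho>' N"
    using t_app.IH t_app.prems by blast+
  then show ?case by simp
next
  case (t_pair \<Gamma> M A N B)
  have "sem Q \<rho> M = sem Q \<rho>' M" "sem Q \<rho> N = sem Q \<rho>' N"
    using t_pair.IH t_pair.prems by blast+
  then show ?case by simp
next
  case (t_fst \<Gamma> M A B)
  have "sem Q \<rho> M = sem Q \<rho>' M" using t_fst.IH t_fst.prems by blast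
  then show ?case by simp
next
  case (t_snd \<Gamma> M A B)
  have "sem Q \<rho> M = sem Q \<rho>' M" using t_snd.IH t_snd.prems by blast
  then show ?case by simp
qed auto

lemma closed_sem: "typing [] M T \<Longrightarrow> sem Q \<rho> M = interp Q M"
  unfolding interp_def using sem_env by fastforce

lemma sound:
  assumes "finite Q"
  shows "typing \<Gamma> M T \<Longrightarrow> (\<forall>i<length \<Gamma>. \<rho> ! i \<in> semdom Q (\<Gamma> ! i)) \<Longrightarrow> sem Q \<rho> M \<in> semdom Q T"
proof (induction arbitrary: \<rho> rule: typing.induct)
  case (t_lam A \<Gamma> M B)
  have "sem Q (x # \<rho>) M \<in> semdom Q B" if "x \<in> semdom Q A" for x
    using t_lam.IH[of "x # \<rho>"] t_lam.prems that by (simp add: nth_Cons split: nat.split)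
  then show ?case using graph_of_mem[OF assms] by simp
next
  case (t_app \<Gamma> M A B N)
  have "sem Q \<rho> M \<in> semdom Q (TArr A B)" by (rule t_app.IH(1)[OF t_app.prems])
  moreover have "sem Q \<rho> N \<in> semdom Q A" by (rule t_app.IH(2)[OF t_app.prems])
  ultimately show ?case unfolding sem.simps by (rule vapp_mem)
next
  case (t_fst \<Gamma> M A B)
  have "sem Q \<rho> M \<in> semdom Q (TProd A B)" by (rule t_fst.IH[OF t_fst.prems])
  then show ?case by auto
next
  case (t_snd \<Gamma> M A B)
  have "sem Q \<rho> M \<in> semdom Q (TProd A B)" by (rule t_snd.IH[OF t_snd.prems])
  then show ?case by auto
qed auto

lemma interp_sound: "finite Q \<Longrightarrow> typing [] M T \<Longrightarrow> interp Q M \<in> semdom Q T"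
  unfolding interp_def using sound by fastforce

lemma Dsem_semdom: "finite Q \<Longrightarrow> v \<in> Dsem Q T \<Longrightarrow> v \<in> semdom Q T"
  unfolding Dsem_def closed_tms_def using interp_sound by blast

lemma lrel_sub:
  assumes "partial_surj Q Q' R"
  shows "(x, y) \<in> lrel Q Q' R T \<Longrightarrow> x \<in> semdom Q T \<and> y \<in> semdom Q' T"
proof (induction T arbitrary: x y)
  case TO
  then show ?case using assms unfolding partial_surj_def by auto
next
  case (TProd A B)
  then show ?case by fastforce
qed auto

lemma lrel_arr_app:
  "(g, h) \<in> lrel Q Q' R (TArr A B) \<Longrightarrow> (x, y) \<in> lrel Q Q' R A \<Longrightarrow> (vapp g x, vapp h y) \<in> lrel Q Q' R B"
  by (simp only: lrel.simps) blast

lemma lrel_arrI: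
  "g \<in> semdom Q (TArr A B) \<Longrightarrow> h \<in> semdom Q' (TArr A B) \<Longrightarrow>
   (\<And>x y. (x, y) \<in> lrel Q Q' R A \<Longrightarrow> (vapp g x, vapp h y) \<in> lrel Q Q' R B) \<Longrightarrow>
   (g, h) \<in> lrel Q Q' R (TArr A B)"
  by (simp only: lrel.simps) blast

lemma fundamental:
  assumes "finite Q" "finite Q'" "partial_surj Q Q' R"
  shows "typing \<Gamma> M T \<Longrightarrow> length \<rho> = length \<Gamma> \<Longrightarrow> length \<rho>' = length \<Gamma> \<Longrightarrow>
    (\<forall>i<length \<Gamma>. (\<rho> ! i, \<rho>' ! i) \<in> lrel Q Q' R (\<Gamma> ! i)) \<Longrightarrow>
    (sem Q \<rho> M, sem Q' \<rho>' M) \<in> lrel Q Q' R T"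
proof (induction arbitrary: \<rho> \<rho>' rule: typing.induct)
  case (t_var i \<Gamma>)
  then show ?case by simp
next
  case (t_lam A \<Gamma> M B)
  have env1: "\<forall>i<length \<Gamma>. \<rho> ! i \<in> semdom Q (\<Gamma> ! i)" using t_lam.prems lrel_sub[OF assms(3)] by blast
  have env2: "\<forall>i<length \<Gamma>. \<rho>' ! i \<in> semdom Q' (\<Gamma> ! i)" using t_lam.prems lrel_sub[OF assms(3)] by blast
  have m1: "sem Q \<rho> (Lam A M) \<in> semdom Q (TArr A B)"
    using sound[OF assms(1) typing.t_lam[OF t_lam.hyps] env1] .
  have m2: "sem Q' \<rho>' (Lam A M) \<in> semdom Q' (TArr A B)"
    using sound[OF assms(2) typing.t_lam[OF t_lam.hyps] env2] .
  have r: "(vapp (sem Q \<rho> (Lam A M)) x, vapp (sem Q' \<rho>' (Lam A M)) y) \<in> lrel Q Q' R B"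
    if xy: "(x, y) \<in> lrel Q Q' R A" for x y
  proof -
    have x: "x \<in> semdom Q A" and y: "y \<in> semdom Q' A" using lrel_sub[OF assms(3) xy] by auto
    have "(sem Q (x # \<rho>) M, sem Q' (y # \<rho>') M) \<in> lrel Q Q' R B"
      using t_lam.IH[of "x # \<rho>" "y # \<rho>'"] t_lam.prems xy by (simp add: nth_Cons split: nat.split)
    then show ?thesis using vapp_graph_of[OF assms(1) x] vapp_graph_of[OF assms(2) y] by simp
  qed
  show ?case using m1 m2 r by (rule lrel_arrI)
next
  case (t_app \<Gamma> M A B N)
  have "(sem Q \<rho> M, sem Q' \<rho>' M) \<in> lrel Q Q' R (TArr A B)" by (rule t_app.IH(1)[OF t_app.prems])
  moreover have "(sem Q \<rho> N, sem Q' \<rho>' N) \<in> lrel Q Q' R A" by (rule t_app.IH(2)[OF t_app.prems])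
  ultimately show ?case unfolding sem.simps by (rule lrel_arr_app)
next
  case (t_pair \<Gamma> M A N B)
  have "(sem Q \<rho> M, sem Q' \<rho>' M) \<in> lrel Q Q' R A" by (rule t_pair.IH(1)[OF t_pair.prems])
  moreover have "(sem Q \<rho> N, sem Q' \<rho>' N) \<in> lrel Q Q' R B" by (rule t_pair.IH(2)[OF t_pair.prems])
  ultimately show ?case by auto
next
  case (t_fst \<Gamma> M A B)
  have "(sem Q \<rho> M, sem Q' \<rho>' M) \<in> lrel Q Q' R (TProd A B)" by (rule t_fst.IH[OF t_fst.prems])
  then show ?case by auto
next
  case (t_snd \<Gamma> M A B)
  have "(sem Q \<rho> M, sem Q' \<rho>' M) \<in> lrel Q Q' R (TProd A B)" by (rule t_snd.IH[OF t_snd.prems])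
  then show ?case by auto
next
  case (t_star \<Gamma>)
  then show ?case by simp
qed

lemma interp_rel:
  assumes "finite Q" "finite Q'" "partial_surj Q Q' R" "typing [] M T"
  shows "(interp Q M, interp Q' M) \<in> lrel Q Q' R T"
  using fundamental[OF assms(1-3) assms(4)] unfolding interp_def by simp



lemma semdom_ne: "finite Q \<Longrightarrow> Q \<noteq> {} \<Longrightarrow> semdom Q T \<noteq> {}"
proof (induction T)
  case (TProd A B)
  then obtain a b where "a \<in> semdom Q A" "b \<in> semdom Q B" by blast
  then have "PairV a b \<in> semdom Q (TProd A B)" by simp
  then show ?case by blast
next
  case (TArr A B)
  then obtain b where b: "b \<in> semdom Q B" by blast
  have "graph_of Q A (\<lambda>_. b) \<in> semdom Q (TArr A B)" by (rule graph_of_mem[OF TArr.prems(1)]) (rule b)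
  then show ?case by blast
qed auto

lemma fs:
  assumes fQ: "finite Q" and fQ': "finite Q'" and ps: "partial_surj Q Q' R"
  shows "(\<forall>x y y'. (x, y) \<in> lrel Q Q' R T \<longrightarrow> (x, y') \<in> lrel Q Q' R T \<longrightarrow> y = y') \<and>
         (\<forall>y\<in>semdom Q' T. \<exists>x. (x, y) \<in> lrel Q Q' R T)"
proof (induction T)
  case TO
  then show ?case using ps unfolding partial_surj_def by auto
next
  case TUnit
  then show ?case by simp
next
  case (TProd A B)
  show ?case
  proof (intro conjI allI impI ballI)
    fix x y y' assume "(x, y) \<in> lrel Q Q' R (TProd A B)" "(x, y') \<in> lrel Q Q' R (TProd A B)"
    then show "y = y'" using TProd.IH by auto
  next
    fix y assume "y \<in> semdom Q' (TProd A B)"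
    then obtain c d where cd: "y = PairV c d" "c \<in> semdom Q' A" "d \<in> semdom Q' B" by auto
    then obtain a b where "(a, c) \<in> lrel Q Q' R A" "(b, d) \<in> lrel Q Q' R B" using TProd.IH by blast
    then have "(PairV a b, y) \<in> lrel Q Q' R (TProd A B)" using cd by simp
    then show "\<exists>x. (x, y) \<in> lrel Q Q' R (TProd A B)" by blast
  qed
next
  case (TArr A B)
  have funA: "\<And>x y y'. (x, y) \<in> lrel Q Q' R A \<Longrightarrow> (x, y') \<in> lrel Q Q' R A \<Longrightarrow> y = y'"
    and surA: "\<And>y. y \<in> semdom Q' A \<Longrightarrow> \<exists>x. (x, y) \<in> lrel Q Q' R A"
    and funB: "\<And>x y y'. (x, y) \<in> lrel Q Q' R B \<Longrightarrow> (x, y') \<in> lrel Q Q' R B \<Longrightarrow> y = y'"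
    and surB: "\<And>y. y \<in> semdom Q' B \<Longrightarrow> \<exists>x. (x, y) \<in> lrel Q Q' R B"
    using TArr.IH by blast+
  show ?case
  proof (intro conjI allI impI ballI)
    fix g h h' assume gh: "(g, h) \<in> lrel Q Q' R (TArr A B)" and gh': "(g, h') \<in> lrel Q Q' R (TArr A B)"
    have h: "h \<in> semdom Q' (TArr A B)" and h': "h' \<in> semdom Q' (TArr A B)"
      using lrel_sub[OF ps gh] lrel_sub[OF ps gh'] by auto
    show "h = h'"
    proof (rule arr_eq[OF h h'])
      fix y assume "y \<in> semdom Q' A"
      then obtain x where xy: "(x, y) \<in> lrel Q Q' R A" using surA by blast
      show "vapp h y = vapp h' y"
        using funB[OF lrel_arr_app[OF gh xy] lrel_arr_app[OF gh' xy]] .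
    qed
  next
    fix h assume h: "h \<in> semdom Q' (TArr A B)"
    show "\<exists>g. (g, h) \<in> lrel Q Q' R (TArr A B)"
    proof (cases "semdom Q B = {}")
      case False
      then obtain b0 where b0: "b0 \<in> semdom Q B" by blast
      define f where "f = (\<lambda>x. if \<exists>y. (x, y) \<in> lrel Q Q' R A
          then SOME x'. (x', vapp h (SOME y. (x, y) \<in> lrel Q Q' R A)) \<in> lrel Q Q' R B else b0)"
      have fx: "(f x, vapp h y) \<in> lrel Q Q' R B" if xy: "(x, y) \<in> lrel Q Q' R A" for x y
      proof -
        have ex: "\<exists>y. (x, y) \<in> lrel Q Q' R A" using xy by blast
        have y0: "(SOME y. (x, y) \<in> lrel Q Q' R A) = y" using funA[OF someI_ex[OF ex] xy] .
        have "y \<in> semdom Q' A" using lrel_sub[OF ps xy] by simp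
        then have "vapp h y \<in> semdom Q' B" using vapp_mem[OF h] by blast
        then have "\<exists>x'. (x', vapp h y) \<in> lrel Q Q' R B" using surB by blast
        then have "(SOME x'. (x', vapp h y) \<in> lrel Q Q' R B, vapp h y) \<in> lrel Q Q' R B" by (rule someI_ex)
        then show ?thesis unfolding f_def using ex y0 by simp
      qed
      have fmem: "f x \<in> semdom Q B" if "x \<in> semdom Q A" for x
      proof (cases "\<exists>y. (x, y) \<in> lrel Q Q' R A")
        case True
        then obtain y where "(x, y) \<in> lrel Q Q' R A" by blast
        then show ?thesis using fx lrel_sub[OF ps] by blast
      next
        case False
        then show ?thesis unfolding f_def using b0 by simp
      qed
      have g: "graph_of Q A f \<in> semdom Q (TArr A B)" by (rule graph_of_mem[OF fQ fmem])
      have "(graph_of Q A f, h) \<in> lrel Q Q' R (TArr A B)"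
      proof (rule lrel_arrI[OF g h])
        fix x y assume xy: "(x, y) \<in> lrel Q Q' R A"
        have "x \<in> semdom Q A" using lrel_sub[OF ps xy] by simp
        then show "(vapp (graph_of Q A f) x, vapp h y) \<in> lrel Q Q' R B"
          using vapp_graph_of[OF fQ] fx[OF xy] by simp
      qed
      then show ?thesis by blast
    next
      case True
      have QB': "semdom Q' B = {}"
      proof (rule ccontr)
        assume "semdom Q' B \<noteq> {}"
        then obtain y where "y \<in> semdom Q' B" by blast
        then obtain x where "(x, y) \<in> lrel Q Q' R B" using surB by blast
        then show False using lrel_sub[OF ps] True by blast
      qed
      have QA': "semdom Q' A = {}"
        using vapp_mem[OF h] QB' by blast
      have Qe: "Q = {}" using semdom_ne[OF fQ] True by blast
      then have "Q' = {}" using ps unfolding partial_surj_def by blast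
      then have QQ: "Q' = Q" using Qe by simp
      have hQ: "h \<in> semdom Q (TArr A B)" using h QQ by simp
      have "(h, h) \<in> lrel Q Q' R (TArr A B)"
      proof (rule lrel_arrI[OF hQ h])
        fix x y assume xy: "(x, y) \<in> lrel Q Q' R A"
        then show "(vapp h x, vapp h y) \<in> lrel Q Q' R B" using lrel_sub[OF ps xy] QA' by blast
      qed
      then show ?thesis by blast
    qed
  qed
qed

lemma lrel_fun:
  assumes "finite Q" "finite Q'" "partial_surj Q Q' R"
    "(x, y) \<in> lrel Q Q' R T" "(x, y') \<in> lrel Q Q' R T"
  shows "y = y'"
  using fs[OF assms(1-3)] assms(4,5) by blast



lemma prof_D: "\<theta> \<in> ProLam_hom A B \<Longrightarrow> finite Q \<Longrightarrow> \<exists>M. typing [] M (TArr A B) \<and> interp Q M = \<theta> Q"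
proof -
  assume a: "\<theta> \<in> ProLam_hom A B" "finite Q"
  then have "\<theta> Q \<in> Dsem Q (TArr A B)" unfolding ProLam_hom_def profinite_def by blast
  then show ?thesis unfolding Dsem_def closed_tms_def by auto
qed

lemma prof_semdom: "\<theta> \<in> ProLam_hom A B \<Longrightarrow> finite Q \<Longrightarrow> \<theta> Q \<in> semdom Q (TArr A B)"
  using prof_D interp_sound by metis

lemma prof_rel: "\<theta> \<in> ProLam_hom A B \<Longrightarrow> finite Q \<Longrightarrow> finite Q' \<Longrightarrow> partial_surj Q Q' R \<Longrightarrow>
  (\<theta> Q, \<theta> Q') \<in> lrel Q Q' R (TArr A B)"
  unfolding ProLam_hom_def profinite_def by blast

lemma prof_inf: "\<theta> \<in> ProLam_hom A B \<Longrightarrow> \<not> finite Q \<Longrightarrow> \<theta> Q = undefined"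
  unfolding ProLam_hom_def profinite_def by blast

lemma tcomp_typing: "typing [] N (TArr B C) \<Longrightarrow> typing [] M (TArr A B) \<Longrightarrow> typing [] (tcomp A N M) (TArr A C)"
proof -
  assume a: "typing [] N (TArr B C)" "typing [] M (TArr A B)"
  have v: "typing [A] (Var 0) A" using typing.t_var[of 0 "[A]"] by simp
  have "typing [A] N (TArr B C)" "typing [A] M (TArr A B)" using typing_weaken[OF a(1), of "[A]"] typing_weaken[OF a(2), of "[A]"] by simp_all
  then show ?thesis using v unfolding tcomp_def by (intro typing.intros)
qed

lemma interp_tcomp: "typing [] N (TArr B C) \<Longrightarrow> typing [] M (TArr A B) \<Longrightarrow>
  interp Q (tcomp A N M) = graph_of Q A (\<lambda>x. vapp (interp Q N) (vapp (interp Q M) x))"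
  unfolding tcomp_def interp_def[of Q "Lam _ _"] by (simp add: closed_sem)

lemma id_typing: "typing [] (Lam A (Var 0)) (TArr A A)"
  using typing.t_lam[OF typing.t_var[of 0 "[A]"]] by simp

lemma interp_id: "interp Q (Lam A (Var 0)) = graph_of Q A (\<lambda>x. x)"
  unfolding interp_def by simp

lemma pi_eq_cls: "interp Q M0 = \<theta> Q \<Longrightarrow> typing [] M0 T \<Longrightarrow> pi_proj Q T \<theta> = lamcls Q T M0"
  unfolding pi_proj_def lamcls_def simrel_def by auto

lemma pi_some: "\<theta> \<in> ProLam_hom A B \<Longrightarrow> finite Q \<Longrightarrow>
   typing [] (SOME M. M \<in> pi_proj Q (TArr A B) \<theta>) (TArr A B) \<and>
   interp Q (SOME M. M \<in> pi_proj Q (TArr A B) \<theta>) = \<theta> Q"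
proof -
  assume a: "\<theta> \<in> ProLam_hom A B" "finite Q"
  then obtain M where "typing [] M (TArr A B) \<and> interp Q M = \<theta> Q" using prof_D by blast
  then have "M \<in> pi_proj Q (TArr A B) \<theta>" unfolding pi_proj_def by simp
  then have "(SOME M. M \<in> pi_proj Q (TArr A B) \<theta>) \<in> pi_proj Q (TArr A B) \<theta>" by (rule someI)
  then show ?thesis unfolding pi_proj_def by simp
qed

lemma prof_transfer:
  assumes "\<theta> \<in> ProLam_hom A B" "finite Q" "finite Q'" "partial_surj Q Q' R"
    "typing [] M (TArr A B)" "interp Q M = \<theta> Q"
  shows "interp Q' M = \<theta> Q'"
proof -
  have "(interp Q M, interp Q' M) \<in> lrel Q Q' R (TArr A B)" using interp_rel assms(2-5) by blast
  moreover have "(\<theta> Q, \<theta> Q') \<in> lrel Q Q' R (TArr A B)" using prof_rel assms(1-4) by blast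
  ultimately show ?thesis using lrel_fun[OF assms(2-4)] assms(6) by metis
qed

lemma lam_hom_rep: "X \<in> lam_hom Q A B \<Longrightarrow>
   \<exists>M0. typing [] M0 (TArr A B) \<and> X = {N. typing [] N (TArr A B) \<and> interp Q N = interp Q M0}"
  unfolding lam_hom_def closed_tms_def simrel_def quotient_def by auto

lemma lam_hom_some: "X \<in> lam_hom Q A B \<Longrightarrow>
   X = {N. typing [] N (TArr A B) \<and> interp Q N = interp Q (SOME M. M \<in> X)} \<and> typing [] (SOME M. M \<in> X) (TArr A B)"
proof -
  assume "X \<in> lam_hom Q A B"
  then obtain M0 where M0: "typing [] M0 (TArr A B)" "X = {N. typing [] N (TArr A B) \<and> interp Q N = interp Q M0}"
    using lam_hom_rep by blast
  then have "M0 \<in> X" by simp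
  then have "(SOME M. M \<in> X) \<in> X" by (rule someI)
  then have "typing [] (SOME M. M \<in> X) (TArr A B)" "interp Q (SOME M. M \<in> X) = interp Q M0" using M0 by auto
  then show ?thesis using M0 by simp
qed



lemma part0: "(\<forall>A B C \<theta> \<psi>. \<theta> \<in> ProLam_hom A B \<longrightarrow> \<psi> \<in> ProLam_hom B C \<longrightarrow>
        pro_comp A \<theta> \<psi> \<in> ProLam_hom A C)"
proof (intro allI impI)

  fix A B C \<theta> \<psi> assume th: "\<theta> \<in> ProLam_hom A B" and ps: "\<psi> \<in> ProLam_hom B C"
  have dom: "pro_comp A \<theta> \<psi> Q \<in> semdom Q (TArr A C)" if fQ: "finite Q" for Q
  proof -
    have "pro_comp A \<theta> \<psi> Q = graph_of Q A (\<lambda>x. vapp (\<psi> Q) (vapp (\<theta> Q) x))"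
      unfolding pro_comp_def using fQ by simp
    also have "\<dots> \<in> semdom Q (TArr A C)"
    proof (rule graph_of_mem[OF fQ])
      fix x assume "x \<in> semdom Q A"
      then have "vapp (\<theta> Q) x \<in> semdom Q B" using vapp_mem prof_semdom[OF th fQ] by blast
      then show "vapp (\<psi> Q) (vapp (\<theta> Q) x) \<in> semdom Q C" using vapp_mem prof_semdom[OF ps fQ] by blast
    qed
    finally show ?thesis .
  qed
  show "pro_comp A \<theta> \<psi> \<in> ProLam_hom A C"
    unfolding ProLam_hom_def profinite_def mem_Collect_eq
  proof (intro conjI allI impI)
    fix Q :: "nat set" assume "\<not> finite Q" then show "pro_comp A \<theta> \<psi> Q = undefined" unfolding pro_comp_def by simp
  next
    fix Q :: "nat set" assume fQ: "finite Q"
    obtain M where M: "typing [] M (TArr A B)" "interp Q M = \<theta> Q" using prof_D[OF th fQ] by blast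
    obtain N where N: "typing [] N (TArr B C)" "interp Q N = \<psi> Q" using prof_D[OF ps fQ] by blast
    have "pro_comp A \<theta> \<psi> Q = interp Q (tcomp A N M)"
      unfolding pro_comp_def using fQ interp_tcomp[OF N(1) M(1)] M N by simp
    then show "pro_comp A \<theta> \<psi> Q \<in> Dsem Q (TArr A C)"
      unfolding Dsem_def closed_tms_def using tcomp_typing[OF N(1) M(1)] by blast
  next
    fix Q Q' :: "nat set" and R assume fQ: "finite Q" and fQ': "finite Q'" and R: "partial_surj Q Q' R"
    show "(pro_comp A \<theta> \<psi> Q, pro_comp A \<theta> \<psi> Q') \<in> lrel Q Q' R (TArr A C)"
    proof (rule lrel_arrI[OF dom[OF fQ] dom[OF fQ']])
      fix x y assume xy: "(x, y) \<in> lrel Q Q' R A"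
      have x: "x \<in> semdom Q A" and y: "y \<in> semdom Q' A" using lrel_sub[OF R xy] by auto
      have e1: "vapp (pro_comp A \<theta> \<psi> Q) x = vapp (\<psi> Q) (vapp (\<theta> Q) x)"
        unfolding pro_comp_def using fQ vapp_graph_of[OF fQ x] by simp
      have e2: "vapp (pro_comp A \<theta> \<psi> Q') y = vapp (\<psi> Q') (vapp (\<theta> Q') y)"
        unfolding pro_comp_def using fQ' vapp_graph_of[OF fQ' y] by simp
      have "(vapp (\<theta> Q) x, vapp (\<theta> Q') y) \<in> lrel Q Q' R B"
        using lrel_arr_app[OF prof_rel[OF th fQ fQ' R] xy] .
      then have "(vapp (\<psi> Q) (vapp (\<theta> Q) x), vapp (\<psi> Q') (vapp (\<theta> Q') y)) \<in> lrel Q Q' R C"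
        using lrel_arr_app[OF prof_rel[OF ps fQ fQ' R]] by blast
      then show "(vapp (pro_comp A \<theta> \<psi> Q) x, vapp (pro_comp A \<theta> \<psi> Q') y) \<in> lrel Q Q' R C"
        using e1 e2 by simp
    qed
  qed
qed


lemma part1: "(\<forall>A. pro_id A \<in> ProLam_hom A A)"
proof (intro allI impI)
  fix A
  have dom: "pro_id A Q \<in> semdom Q (TArr A A)" if fQ: "finite Q" for Q
    unfolding pro_id_def using fQ graph_of_mem[OF fQ, of A "\<lambda>x. x" A] by simp
  show "pro_id A \<in> ProLam_hom A A"
    unfolding ProLam_hom_def profinite_def mem_Collect_eq
  proof (intro conjI allI impI)
    fix Q :: "nat set" assume "\<not> finite Q" then show "pro_id A Q = undefined" unfolding pro_id_def by simp
  next
    fix Q :: "nat set" assume fQ: "finite Q"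
    have "pro_id A Q = interp Q (Lam A (Var 0))" unfolding pro_id_def interp_id using fQ by simp
    then show "pro_id A Q \<in> Dsem Q (TArr A A)"
      unfolding Dsem_def closed_tms_def using id_typing by blast
  next
    fix Q Q' :: "nat set" and R assume fQ: "finite Q" and fQ': "finite Q'" and R: "partial_surj Q Q' R"
    show "(pro_id A Q, pro_id A Q') \<in> lrel Q Q' R (TArr A A)"
    proof (rule lrel_arrI[OF dom[OF fQ] dom[OF fQ']])
      fix x y assume xy: "(x, y) \<in> lrel Q Q' R A"
      have x: "x \<in> semdom Q A" and y: "y \<in> semdom Q' A" using lrel_sub[OF R xy] by auto
      show "(vapp (pro_id A Q) x, vapp (pro_id A Q') y) \<in> lrel Q Q' R A"
        unfolding pro_id_def using fQ fQ' vapp_graph_of[OF fQ x] vapp_graph_of[OF fQ' y] xy by simp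
    qed
  qed
qed


lemma part2: "(\<forall>Q A B \<theta>. finite Q \<longrightarrow> \<theta> \<in> ProLam_hom A B \<longrightarrow>
        pi_proj Q (TArr A B) \<theta> \<in> lam_hom Q A B)"
proof (intro allI impI)
  fix Q :: "nat set" and A B \<theta> assume fQ: "finite Q" and th: "\<theta> \<in> ProLam_hom A B"
  obtain M where M: "typing [] M (TArr A B)" "interp Q M = \<theta> Q" using prof_D[OF th fQ] by blast
  have "pi_proj Q (TArr A B) \<theta> = simrel Q (TArr A B) `` {M}"
    using pi_eq_cls[of Q M \<theta> "TArr A B"] M unfolding lamcls_def by simp
  moreover have "M \<in> closed_tms (TArr A B)" unfolding closed_tms_def using M by simp
  ultimately show "pi_proj Q (TArr A B) \<theta> \<in> lam_hom Q A B"
    unfolding lam_hom_def by (simp add: quotientI)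
qed


lemma part3: "(\<forall>Q A B C \<theta> \<psi>. finite Q \<longrightarrow> \<theta> \<in> ProLam_hom A B \<longrightarrow> \<psi> \<in> ProLam_hom B C \<longrightarrow>
        pi_proj Q (TArr A C) (pro_comp A \<theta> \<psi>) =
        lam_comp Q A B C (pi_proj Q (TArr A B) \<theta>) (pi_proj Q (TArr B C) \<psi>))"
proof (intro allI impI)
  fix Q :: "nat set" and A B C \<theta> \<psi> assume fQ: "finite Q" and th: "\<theta> \<in> ProLam_hom A B" and ps: "\<psi> \<in> ProLam_hom B C"
  let ?M = "SOME M. M \<in> pi_proj Q (TArr A B) \<theta>"
  let ?N = "SOME N. N \<in> pi_proj Q (TArr B C) \<psi>"
  have M: "typing [] ?M (TArr A B)" "interp Q ?M = \<theta> Q" using pi_some[OF th fQ] by auto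
  have N: "typing [] ?N (TArr B C)" "interp Q ?N = \<psi> Q" using pi_some[OF ps fQ] by auto
  have "interp Q (tcomp A ?N ?M) = pro_comp A \<theta> \<psi> Q"
    unfolding pro_comp_def using fQ interp_tcomp[OF N(1) M(1)] M N by simp
  then show "pi_proj Q (TArr A C) (pro_comp A \<theta> \<psi>) =
        lam_comp Q A B C (pi_proj Q (TArr A B) \<theta>) (pi_proj Q (TArr B C) \<psi>)"
    unfolding lam_comp_def by (rule pi_eq_cls[of Q "tcomp A ?N ?M" "pro_comp A \<theta> \<psi>" "TArr A C", OF _ tcomp_typing[OF N(1) M(1)]])
qed


lemma part4: "(\<forall>Q A. finite Q \<longrightarrow> pi_proj Q (TArr A A) (pro_id A) = lam_id Q A)"
proof (intro allI impI)
  fix Q :: "nat set" and A assume fQ: "finite Q"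
  have "interp Q (Lam A (Var 0)) = pro_id A Q" unfolding interp_id pro_id_def using fQ by simp
  then show "pi_proj Q (TArr A A) (pro_id A) = lam_id Q A"
    unfolding lam_id_def by (rule pi_eq_cls[of Q "Lam A (Var 0)" "pro_id A" "TArr A A", OF _ id_typing])
qed


lemma part5: "(\<forall>Q Q' R A B \<theta>. finite Q \<longrightarrow> finite Q' \<longrightarrow> partial_surj Q Q' R \<longrightarrow> \<theta> \<in> ProLam_hom A B \<longrightarrow>
        lam_f Q' (TArr A B) (pi_proj Q (TArr A B) \<theta>) = pi_proj Q' (TArr A B) \<theta>)"
proof (intro allI impI)
  fix Q Q' :: "nat set" and R A B \<theta> assume fQ: "finite Q" and fQ': "finite Q'" and R: "partial_surj Q Q' R"
    and th: "\<theta> \<in> ProLam_hom A B"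
  let ?M = "SOME M. M \<in> pi_proj Q (TArr A B) \<theta>"
  have M: "typing [] ?M (TArr A B)" "interp Q ?M = \<theta> Q" using pi_some[OF th fQ] by auto
  have tr: "interp Q' ?M = \<theta> Q'" using prof_transfer[OF th fQ fQ' R M] .
  show "lam_f Q' (TArr A B) (pi_proj Q (TArr A B) \<theta>) = pi_proj Q' (TArr A B) \<theta>"
    unfolding lam_f_def using pi_eq_cls[of Q' ?M \<theta> "TArr A B", OF tr M(1)] by simp
qed


lemma part6: "(\<forall>A B (m :: nat set \<Rightarrow> tm set).
        (\<forall>Q. finite Q \<longrightarrow> m Q \<in> lam_hom Q A B) \<longrightarrow>
        (\<forall>Q Q' R. finite Q \<longrightarrow> finite Q' \<longrightarrow> partial_surj Q Q' R \<longrightarrow>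
                  lam_f Q' (TArr A B) (m Q) = m Q') \<longrightarrow>
        (\<exists>!\<theta>. \<theta> \<in> ProLam_hom A B \<and> (\<forall>Q. finite Q \<longrightarrow> pi_proj Q (TArr A B) \<theta> = m Q)))"
proof (intro allI impI)
  fix A B and m :: "nat set \<Rightarrow> tm set"
  assume mh: "\<forall>Q. finite Q \<longrightarrow> m Q \<in> lam_hom Q A B"
    and mc: "\<forall>Q Q' R. finite Q \<longrightarrow> finite Q' \<longrightarrow> partial_surj Q Q' R \<longrightarrow> lam_f Q' (TArr A B) (m Q) = m Q'"
  define \<theta> where "\<theta> = (\<lambda>Q. if finite Q then interp Q (SOME M. M \<in> m Q) else undefined)"
  have mrep: "m Q = {N. typing [] N (TArr A B) \<and> interp Q N = \<theta> Q}"
    "typing [] (SOME M. M \<in> m Q) (TArr A B)" if fQ: "finite Q" for Q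
  proof -
    have l: "m Q = {N. typing [] N (TArr A B) \<and> interp Q N = interp Q (SOME M. M \<in> m Q)} \<and>
      typing [] (SOME M. M \<in> m Q) (TArr A B)" using lam_hom_some[of "m Q" Q A B] mh fQ by blast
    have t: "\<theta> Q = interp Q (SOME M. M \<in> m Q)" unfolding \<theta>_def using fQ by simp
    show "m Q = {N. typing [] N (TArr A B) \<and> interp Q N = \<theta> Q}" unfolding t using conjunct1[OF l] .
    show "typing [] (SOME M. M \<in> m Q) (TArr A B)" using conjunct2[OF l] .
  qed
  have pi: "pi_proj Q (TArr A B) \<theta> = m Q" if "finite Q" for Q
    using mrep[OF that] unfolding pi_proj_def by simp
  have thP: "\<theta> \<in> ProLam_hom A B"
    unfolding ProLam_hom_def profinite_def mem_Collect_eq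
  proof (intro conjI allI impI)
    fix Q :: "nat set" assume "\<not> finite Q" then show "\<theta> Q = undefined" unfolding \<theta>_def by simp
  next
    fix Q :: "nat set" assume fQ: "finite Q"
    have "interp Q (SOME M. M \<in> m Q) \<in> interp Q ` {M. typing [] M (TArr A B)}"
      using mrep(2)[OF fQ] by blast
    then show "\<theta> Q \<in> Dsem Q (TArr A B)" unfolding Dsem_def closed_tms_def \<theta>_def
      using fQ by simp
  next
    fix Q Q' :: "nat set" and R assume fQ: "finite Q" and fQ': "finite Q'" and R: "partial_surj Q Q' R"
    let ?M = "SOME M. M \<in> m Q"
    have Mt: "typing [] ?M (TArr A B)" using mrep(2)[OF fQ] .
    have "lam_f Q' (TArr A B) (m Q) = m Q'" using mc fQ fQ' R by blast
    then have "m Q' = lamcls Q' (TArr A B) ?M" unfolding lam_f_def by simp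
    moreover have "?M \<in> lamcls Q' (TArr A B) ?M" unfolding lamcls_def simrel_def using Mt by simp
    ultimately have "?M \<in> m Q'" by simp
    then have "?M \<in> {N. typing [] N (TArr A B) \<and> interp Q' N = \<theta> Q'}" using mrep(1)[OF fQ'] by simp
    then have e2: "interp Q' ?M = \<theta> Q'" by simp
    have e1: "interp Q ?M = \<theta> Q" unfolding \<theta>_def using fQ by simp
    have "(interp Q ?M, interp Q' ?M) \<in> lrel Q Q' R (TArr A B)" by (rule interp_rel[OF fQ fQ' R Mt])
    then show "(\<theta> Q, \<theta> Q') \<in> lrel Q Q' R (TArr A B)" unfolding e1 e2 .
  qed
  show "\<exists>!\<theta>. \<theta> \<in> ProLam_hom A B \<and> (\<forall>Q. finite Q \<longrightarrow> pi_proj Q (TArr A B) \<theta> = m Q)"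
  proof (rule ex1I[of _ \<theta>])
    show "\<theta> \<in> ProLam_hom A B \<and> (\<forall>Q. finite Q \<longrightarrow> pi_proj Q (TArr A B) \<theta> = m Q)"
      using thP pi by simp
  next
    fix \<theta>' assume h: "\<theta>' \<in> ProLam_hom A B \<and> (\<forall>Q. finite Q \<longrightarrow> pi_proj Q (TArr A B) \<theta>' = m Q)"
    show "\<theta>' = \<theta>"
    proof
      fix Q :: "nat set" show "\<theta>' Q = \<theta> Q"
      proof (cases "finite Q")
        case False
        have "\<theta>' Q = undefined" using prof_inf[OF conjunct1[OF h] False] .
        moreover have "\<theta> Q = undefined" unfolding \<theta>_def using False by simp
        ultimately show ?thesis by simp
      next
        case True
        obtain M where M: "typing [] M (TArr A B)" "interp Q M = \<theta>' Q" using prof_D[OF conjunct1[OF h] True] by blast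
        then have "M \<in> pi_proj Q (TArr A B) \<theta>'" unfolding pi_proj_def by simp
        moreover have "pi_proj Q (TArr A B) \<theta>' = m Q" using conjunct2[OF h] True by blast
        ultimately have "M \<in> m Q" by simp
        then have "interp Q M = \<theta> Q" using mrep(1)[OF True] by simp
        then show ?thesis using M by simp
      qed
    qed
  qed

qed

theorem mainTheorem10:
  shows
  "(\<forall>A B C \<theta> \<psi>. \<theta> \<in> ProLam_hom A B \<longrightarrow> \<psi> \<in> ProLam_hom B C \<longrightarrow>
        pro_comp A \<theta> \<psi> \<in> ProLam_hom A C)
 \<and> (\<forall>A. pro_id A \<in> ProLam_hom A A)
 \<and> (\<forall>Q A B \<theta>. finite Q \<longrightarrow> \<theta> \<in> ProLam_hom A B \<longrightarrow>
        pi_proj Q (TArr A B) \<theta> \<in> lam_hom Q A B)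
 \<and> (\<forall>Q A B C \<theta> \<psi>. finite Q \<longrightarrow> \<theta> \<in> ProLam_hom A B \<longrightarrow> \<psi> \<in> ProLam_hom B C \<longrightarrow>
        pi_proj Q (TArr A C) (pro_comp A \<theta> \<psi>) =
        lam_comp Q A B C (pi_proj Q (TArr A B) \<theta>) (pi_proj Q (TArr B C) \<psi>))
 \<and> (\<forall>Q A. finite Q \<longrightarrow> pi_proj Q (TArr A A) (pro_id A) = lam_id Q A)
 \<and> (\<forall>Q Q' R A B \<theta>. finite Q \<longrightarrow> finite Q' \<longrightarrow> partial_surj Q Q' R \<longrightarrow> \<theta> \<in> ProLam_hom A B \<longrightarrow>
        lam_f Q' (TArr A B) (pi_proj Q (TArr A B) \<theta>) = pi_proj Q' (TArr A B) \<theta>)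
 \<and> (\<forall>A B (m :: nat set \<Rightarrow> tm set).
        (\<forall>Q. finite Q \<longrightarrow> m Q \<in> lam_hom Q A B) \<longrightarrow>
        (\<forall>Q Q' R. finite Q \<longrightarrow> finite Q' \<longrightarrow> partial_surj Q Q' R \<longrightarrow>
                  lam_f Q' (TArr A B) (m Q) = m Q') \<longrightarrow>
        (\<exists>!\<theta>. \<theta> \<in> ProLam_hom A B \<and> (\<forall>Q. finite Q \<longrightarrow> pi_proj Q (TArr A B) \<theta> = m Q)))"
  by (intro conjI part0 part1 part2 part3 part4 part5 part6)

end
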